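(* There exist sets $\{E_{\beta,\gamma}:0<\beta<\gamma\le1\}$, $E_{\beta,\gamma}\subset[1,2]$, such that each $E_{\beta,\gamma}$ is $(\beta,\gamma)$-Assouad regular, and there exists a constant $c\ge1$ such that for all $0<\beta<\gamma\le1$, all $\delta\in(0,1)$ and all intervals $I\subset[1,2]$ with $|I|>\delta$, $$N(E_{\beta,\gamma},\delta)\le c\,\delta^{-\beta},\qquad N(E_{\beta,\gamma}\cap I,\delta)\le c\,\big(\tfrac{\delta}{|I|}\big)^{-\gamma}.$$
   Context: $N(E,\delta)$ is the minimal number of intervals of length $\delta$ covering $E$. $\dim_{\mathrm M}E=\inf\{a>0:\exists c\ \forall\delta\in(0,1),\ N(E,\delta)\le c\delta^{-a}\}$. $\dim_{\mathrm A}E=\inf\{a>0:\exists c\text{ such that for all subintervals }I\subset[1,2]\text{ and }\delta\in(0,|I|),\ N(E\cap I,\delta)\le c\delta^{-a}|I|^a\}$. For $\theta\in[0,1]$, $\overline{\dim}_{\mathrm A,\theta}E=\inf\{a>0:\exists c\text{ such that for all }\delta\in(0,1)\text{ and subintervals }I\subset[1,2]\text{ with }|I|\ge\delta^\theta,\ N(E\cap I,\delta)\le c\delta^{-a}|I|^a\}$. A set $E\subset[1,2]$ is $(\beta,\gamma)$-Assouad regular if either $\gamma=0$, or $\dim_{\mathrm M}E=\beta$, $\dim_{\mathrm A}E=\gamma$ and $\overline{\dim}_{\mathrm A,\theta}E=\dim_{\mathrm A}E$ for all $\theta$ with $1>\theta>1-\beta/\gamma$. *)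

theory Defs
  imports "HOL-Analysis.Analysis"
begin

definition ilen :: "real set \<Rightarrow> real" where
  "ilen I = Sup I - Inf I"

definition covnum :: "real set \<Rightarrow> real \<Rightarrow> nat" where
  "covnum E \<delta> = Inf {n. \<exists>a::nat \<Rightarrow> real. E \<subseteq> (\<Union>i<n. {a i .. a i + \<delta>})}"

definition dimM :: "real set \<Rightarrow> real" where
  "dimM E = Inf {a. a > 0 \<and> (\<exists>c. \<forall>\<delta>. 0 < \<delta> \<and> \<delta> < 1 \<longrightarrow>
      real (covnum E \<delta>) \<le> c * \<delta> powr (-a))}"

definition dimA :: "real set \<Rightarrow> real" where
  "dimA E = Inf {a. a > 0 \<and> (\<exists>c. \<forall>I \<delta>. is_interval I \<and> I \<subseteq> {1..2} \<and>
      0 < \<delta> \<and> \<delta> < ilen I \<longrightarrow>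
      real (covnum (E \<inter> I) \<delta>) \<le> c * \<delta> powr (-a) * ilen I powr a)}"

definition dimAspec :: "real \<Rightarrow> real set \<Rightarrow> real" where
  "dimAspec \<theta> E = Inf {a. a > 0 \<and> (\<exists>c. \<forall>I \<delta>. 0 < \<delta> \<and> \<delta> < 1 \<and>
      is_interval I \<and> I \<subseteq> {1..2} \<and> ilen I \<ge> \<delta> powr \<theta> \<longrightarrow>
      real (covnum (E \<inter> I) \<delta>) \<le> c * \<delta> powr (-a) * ilen I powr a)}"

definition assouad_regular :: "real \<Rightarrow> real \<Rightarrow> real set \<Rightarrow> bool" where
  "assouad_regular \<beta> \<gamma> E \<longleftrightarrow> \<gamma> = 0 \<or>
     (dimM E = \<beta> \<and> dimA E = \<gamma> \<and>
      (\<forall>\<theta>. 1 - \<beta> / \<gamma> < \<theta> \<and> \<theta> < 1 \<longrightarrow> dimAspec \<theta> E = dimA E))"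

end

theory Submission
  imports Defs "HOL-Library.Nat_Bijection"
begin
lemma covnum_upper:
  assumes "S \<subseteq> (\<Union>i<n. {a i .. a i + \<delta>})"
  shows "covnum S \<delta> \<le> n"
  unfolding covnum_def using assms by (auto intro!: cInf_lower)

lemma floor_cover:
  assumes "\<delta> > 0" "finite ((\<lambda>x. \<lfloor>(x - s) / \<delta>\<rfloor>) ` S)"
  shows "\<exists>a. S \<subseteq> (\<Union>i<card ((\<lambda>x. \<lfloor>(x - s) / \<delta>\<rfloor>) ` S). {a i .. a i + \<delta>})"
proof -
  define T where "T = (\<lambda>x. \<lfloor>(x - s) / \<delta>\<rfloor>) ` S"
  obtain h where h: "bij_betw h {0..<card T} T"
    using ex_bij_betw_nat_finite assms(2) T_def by blast
  have cov: "S \<subseteq> (\<Union>i<card T. {s + of_int (h i) * \<delta> .. s + of_int (h i) * \<delta> + \<delta>})"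
  proof
    fix x assume x: "x \<in> S"
    then have "\<lfloor>(x - s) / \<delta>\<rfloor> \<in> T" by (auto simp: T_def)
    then obtain i where i: "i < card T" "h i = \<lfloor>(x - s) / \<delta>\<rfloor>"
      using h unfolding bij_betw_def by (metis atLeastLessThan_iff imageE zero_le)
    define y where "y = (x - s) / \<delta>"
    have xy: "x - s = y * \<delta>" using assms(1) by (simp add: y_def)
    have f1: "of_int \<lfloor>y\<rfloor> * \<delta> \<le> y * \<delta>" using assms(1) by (intro mult_right_mono) auto
      have "y \<le> of_int \<lfloor>y\<rfloor> + 1" by linarith
    then have "y * \<delta> \<le> (of_int \<lfloor>y\<rfloor> + 1) * \<delta>" using assms(1) by (intro mult_right_mono) auto
    then have f2: "y * \<delta> \<le> of_int \<lfloor>y\<rfloor> * \<delta> + \<delta>" by (simp add: distrib_right)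
    have "of_int (h i) * \<delta> \<le> x - s" "x - s \<le> of_int (h i) * \<delta> + \<delta>"
    proof -
      have hi: "h i = \<lfloor>y\<rfloor>" using i(2) unfolding y_def by simp
      show "of_int (h i) * \<delta> \<le> x - s" "x - s \<le> of_int (h i) * \<delta> + \<delta>"
        using hi xy f1 f2 by simp_all
    qed
    then show "x \<in> (\<Union>i<card T. {s + of_int (h i) * \<delta> .. s + of_int (h i) * \<delta> + \<delta>})"
      using i by (intro UN_I[of i]) auto
  qed
  show ?thesis unfolding T_def[symmetric]
    by (rule exI[where x="\<lambda>i. s + of_int (h i) * \<delta>"]) (rule cov)
qed

lemma covnum_floor:
  assumes "\<delta> > 0" "finite ((\<lambda>x. \<lfloor>(x - s) / \<delta>\<rfloor>) ` S)"
  shows "covnum S \<delta> \<le> card ((\<lambda>x. \<lfloor>(x - s) / \<delta>\<rfloor>) ` S)"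
  using floor_cover[OF assms] covnum_upper by blast

lemma bounded_floor_finite:
  assumes "S \<subseteq> {lo..hi}" "\<delta> > 0"
  shows "finite ((\<lambda>x. \<lfloor>(x - lo) / \<delta>\<rfloor>) ` S)"
proof (rule finite_subset)
  show "(\<lambda>x. \<lfloor>(x - lo) / \<delta>\<rfloor>) ` S \<subseteq> {0..\<lfloor>(hi - lo) / \<delta>\<rfloor>}"
  proof
    fix z assume "z \<in> (\<lambda>x. \<lfloor>(x - lo) / \<delta>\<rfloor>) ` S"
    then obtain x where x: "x \<in> S" "z = \<lfloor>(x - lo) / \<delta>\<rfloor>" by blast
    have "lo \<le> x" "x \<le> hi" using x assms(1) by auto
    then have "0 \<le> (x - lo) / \<delta>" "(x - lo) / \<delta> \<le> (hi - lo) / \<delta>"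
      using assms(2) by (simp_all add: divide_right_mono)
    then show "z \<in> {0..\<lfloor>(hi - lo) / \<delta>\<rfloor>}" using x(2) by (auto intro: floor_mono)
  qed
qed simp

lemma covnum_attained:
  assumes "S \<subseteq> {lo..hi}" "\<delta> > 0"
  shows "\<exists>a. S \<subseteq> (\<Union>i<covnum S \<delta>. {a i .. a i + \<delta>})"
proof -
  obtain a0 where "S \<subseteq> (\<Union>i<card ((\<lambda>x. \<lfloor>(x - lo) / \<delta>\<rfloor>) ` S). {a0 i .. a0 i + \<delta>})"
    using floor_cover[OF assms(2) bounded_floor_finite[OF assms]] by blast
  then have ne: "{n. \<exists>a::nat \<Rightarrow> real. S \<subseteq> (\<Union>i<n. {a i .. a i + \<delta>})} \<noteq> {}" by blast
  show ?thesis using Inf_nat_def1[OF ne] unfolding covnum_def by blast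
qed

lemma covnum_mono_delta:
  assumes "\<delta>' \<le> \<delta>" "S \<subseteq> {lo..hi}" "\<delta>' > 0"
  shows "covnum S \<delta> \<le> covnum S \<delta>'"
proof -
  obtain a where a: "S \<subseteq> (\<Union>i<covnum S \<delta>'. {a i .. a i + \<delta>'})"
    using covnum_attained[OF assms(2,3)] by blast
  have "S \<subseteq> (\<Union>i<covnum S \<delta>'. {a i .. a i + \<delta>})"
    using a assms(1) by fastforce
  then show ?thesis by (rule covnum_upper)
qed

lemma covnum_lower:
  assumes "S \<subseteq> {lo..hi}" "\<delta> > 0" "P \<subseteq> S" "finite P"
    and sep: "\<And>x y. x \<in> P \<Longrightarrow> y \<in> P \<Longrightarrow> x \<noteq> y \<Longrightarrow> \<bar>x - y\<bar> > \<delta>"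
  shows "card P \<le> covnum S \<delta>"
proof -
  obtain a where a: "S \<subseteq> (\<Union>i<covnum S \<delta>. {a i .. a i + \<delta>})"
    using covnum_attained[OF assms(1,2)] by blast
  define f where "f x = (SOME i. i < covnum S \<delta> \<and> x \<in> {a i .. a i + \<delta>})" for x
  have f: "f x < covnum S \<delta> \<and> x \<in> {a (f x) .. a (f x) + \<delta>}" if "x \<in> P" for x
  proof -
    have "\<exists>i. i < covnum S \<delta> \<and> x \<in> {a i .. a i + \<delta>}" using a that assms(3) by blast
    then show ?thesis unfolding f_def by (rule someI_ex)
  qed
  have "inj_on f P"
  proof (rule inj_onI)
    fix x y assume xy: "x \<in> P" "y \<in> P" "f x = f y"
    show "x = y"
    proof (rule ccontr)
      assume "x \<noteq> y"
      then have "\<bar>x - y\<bar> > \<delta>" using sep xy by auto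
      moreover have "\<bar>x - y\<bar> \<le> \<delta>" using f[OF xy(1)] f[OF xy(2)] xy(3) by auto
      ultimately show False by simp
    qed
  qed
  moreover have "f ` P \<subseteq> {..<covnum S \<delta>}" using f by auto
  ultimately show ?thesis by (metis card_inj_on_le card_lessThan finite_lessThan)
qed

lemma covnum_empty: "covnum {} \<delta> = 0"
  unfolding covnum_def by (metis (mono_tags, lifting) empty_subsetI le_zero_eq cInf_lower bdd_below_bot mem_Collect_eq)

definition xpt :: "nat set \<Rightarrow> real" where
  "xpt D = 1 + (\<Sum>j\<in>D. (1/2::real)^j)"

lemma geo_sum_int: "n \<le> L \<Longrightarrow> (\<Sum>j\<in>{n<..L}. (1/2::real)^j) = (1/2)^n - (1/2)^L"
proof (induction L rule: dec_induct)
  case base then show ?case by simp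
next
  case (step L)
  have "{n<..Suc L} = insert (Suc L) {n<..L}" using step by auto
  then show ?case using step by simp
qed

lemma tail_lt:
  assumes "finite D" "D \<subseteq> {n<..}"
  shows "(\<Sum>j\<in>D. (1/2::real)^j) < (1/2)^n"
proof (cases "D = {}")
  case True then show ?thesis by simp
next
  case False
  define L where "L = Max D"
  from False obtain x where x: "x \<in> D" by auto
  have "n < x" using assms(2) x by auto
  then have nL: "n \<le> L" using Max_ge[OF assms(1) x] unfolding L_def by linarith
  have "D \<subseteq> {n<..L}" using assms L_def by auto
  then have "(\<Sum>j\<in>D. (1/2::real)^j) \<le> (\<Sum>j\<in>{n<..L}. (1/2::real)^j)"
    by (intro sum_mono2) auto
  also have "\<dots> < (1/2)^n" using geo_sum_int[OF nL] by simp
  finally show ?thesis .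
qed

lemma sum_nonneg_half: "0 \<le> (\<Sum>j\<in>D. (1/2::real)^j)"
  by (intro sum_nonneg) auto

lemma half_pow_div: "j \<le> n \<Longrightarrow> (1/2::real)^j / (1/2)^n = 2^(n-j)"
proof -
  assume "j \<le> n"
  then have "(2::real)^n = 2^(n-j) * 2^j" by (simp add: power_add[symmetric])
  then show ?thesis by (simp add: power_one_over field_simps)
qed

lemma xpt_floor:
  assumes "finite D"
  shows "\<lfloor>(xpt D - 1) / (1/2)^n\<rfloor> = (\<Sum>j\<in>D \<inter> {..n}. (2::int)^(n-j))"
proof -
  have split: "(\<Sum>j\<in>D. (1/2::real)^j) = (\<Sum>j\<in>D \<inter> {..n}. (1/2::real)^j) + (\<Sum>j\<in>D \<inter> {n<..}. (1/2::real)^j)"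
    using assms by (subst sum.union_disjoint[symmetric]) (auto intro!: sum.cong)
  have a: "(\<Sum>j\<in>D \<inter> {..n}. (1/2::real)^j) / (1/2)^n = of_int (\<Sum>j\<in>D \<inter> {..n}. (2::int)^(n-j))"
    by (auto simp: sum_divide_distrib half_pow_div intro!: sum.cong)
  have b0: "(\<Sum>j\<in>D \<inter> {n<..}. (1/2::real)^j) < (1/2)^n"
    using assms by (intro tail_lt) auto
  have b: "(\<Sum>j\<in>D \<inter> {n<..}. (1/2::real)^j) / (1/2)^n < 1"
    using b0 by simp
  have b2: "0 \<le> (\<Sum>j\<in>D \<inter> {n<..}. (1/2::real)^j) / (1/2)^n"
    using sum_nonneg_half by simp
  have "(xpt D - 1) / (1/2)^n = of_int (\<Sum>j\<in>D \<inter> {..n}. (2::int)^(n-j)) + (\<Sum>j\<in>D \<inter> {n<..}. (1/2::real)^j) / (1/2)^n"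
    unfolding xpt_def using split a by (simp add: add_divide_distrib)
  then show ?thesis using b b2 by (simp add: floor_unique)
qed

lemma pow_split:
  assumes "m \<le> n" "finite D"
  shows "(\<Sum>j\<in>D \<inter> {..n}. (2::int)^(n-j)) = 2^(n-m) * (\<Sum>j\<in>D \<inter> {..m}. (2::int)^(m-j)) + (\<Sum>j\<in>D \<inter> {m<..n}. (2::int)^(n-j))"
proof -
  have "D \<inter> {..n} = (D \<inter> {..m}) \<union> (D \<inter> {m<..n})" using assms by auto
  then have "(\<Sum>j\<in>D \<inter> {..n}. (2::int)^(n-j)) = (\<Sum>j\<in>D \<inter> {..m}. (2::int)^(n-j)) + (\<Sum>j\<in>D \<inter> {m<..n}. (2::int)^(n-j))"
    using assms by (simp add: sum.union_disjoint[symmetric] disjoint_iff) 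
  moreover have "(\<Sum>j\<in>D \<inter> {..m}. (2::int)^(n-j)) = 2^(n-m) * (\<Sum>j\<in>D \<inter> {..m}. (2::int)^(m-j))"
    using assms by (auto simp: sum_distrib_left power_add[symmetric] intro!: sum.cong)
  ultimately show ?thesis by simp
qed

lemma xpt_enc:
  assumes "D \<subseteq> {..N}"
  shows "xpt D = 1 + real (set_encode ((\<lambda>j. N - j) ` D)) / 2^N"
proof -
  have fin: "finite D" using assms finite_subset by blast
  have inj: "inj_on (\<lambda>j. N - j) D" using assms by (auto simp: inj_on_def subset_iff) (metis diff_diff_cancel)
  have "set_encode ((\<lambda>j. N - j) ` D) = (\<Sum>j\<in>D. 2^(N-j))"
    unfolding set_encode_def using inj by (simp add: sum.reindex)
  then have "real (set_encode ((\<lambda>j. N - j) ` D)) / 2^N = (\<Sum>j\<in>D. (1/2::real)^j)"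
    using assms by (auto simp: sum_divide_distrib power_diff field_simps intro!: sum.cong)
  then show ?thesis unfolding xpt_def by simp
qed

lemma xpt_sep:
  assumes "D \<subseteq> {..N}" "D' \<subseteq> {..N}" "D \<noteq> D'"
  shows "\<bar>xpt D - xpt D'\<bar> \<ge> (1/2)^N"
proof -
  define f where "f = (\<lambda>j. N - j)"
  have inj: "inj_on f {..N}" by (auto simp: inj_on_def f_def)
  have "f ` D \<noteq> f ` D'" using inj_on_image_eq_iff[OF inj assms(1,2)] assms(3) by simp
  moreover have "finite (f ` D)" "finite (f ` D')" using assms finite_subset by blast+
  ultimately have ne: "set_encode (f ` D) \<noteq> set_encode (f ` D')" by (simp add: set_encode_eq)
  have "\<bar>real (set_encode (f ` D)) - real (set_encode (f ` D'))\<bar> \<ge> 1"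
    using ne by linarith
  then have "\<bar>real (set_encode (f ` D)) - real (set_encode (f ` D'))\<bar> / 2^N \<ge> 1 / 2^N"
    by (intro divide_right_mono) auto
  then show ?thesis using xpt_enc[OF assms(1)] xpt_enc[OF assms(2)] unfolding f_def
    by (simp add: power_divide abs_divide diff_divide_distrib[symmetric])
qed

lemma xpt_inj: "inj_on xpt (Pow {..N})"
  by (rule inj_onI) (metis Pow_iff xpt_sep abs_0 diff_self zero_less_power zero_less_divide_1_iff zero_less_numeral not_le)

definition Fs :: "real \<Rightarrow> nat set" where
  "Fs g = {j. \<lfloor>g * real j\<rfloor> > \<lfloor>g * (real j - 1)\<rfloor>}"

lemma Fs_count:
  assumes "0 \<le> g" "g \<le> 1" "m \<le> n"
  shows "int (card (Fs g \<inter> {m<..n})) = \<lfloor>g * real n\<rfloor> - \<lfloor>g * real m\<rfloor>"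
  using assms(3)
proof (induction n rule: dec_induct)
  case base then show ?case by simp
next
  case (step n)
  have eq: "Fs g \<inter> {m<..Suc n} = (if Suc n \<in> Fs g then insert (Suc n) (Fs g \<inter> {m<..n}) else Fs g \<inter> {m<..n})"
    using step by (auto simp: le_Suc_eq)
  have a: "\<lfloor>g * real n\<rfloor> \<le> \<lfloor>g * real (Suc n)\<rfloor>" using assms by (intro floor_mono mult_left_mono) auto
  have "g * real (Suc n) \<le> g * real n + 1" using assms by (simp add: algebra_simps)
  then have b: "\<lfloor>g * real (Suc n)\<rfloor> \<le> \<lfloor>g * real n\<rfloor> + 1"
    by (metis floor_add_int floor_mono of_int_1)
  have c: "Suc n \<in> Fs g \<longleftrightarrow> \<lfloor>g * real (Suc n)\<rfloor> > \<lfloor>g * real n\<rfloor>"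
    unfolding Fs_def by simp
  show ?case using step eq a b c by (auto split: if_splits)
qed

lemma Fs_count_real:
  assumes "0 \<le> g" "g \<le> 1" "m \<le> n"
  shows "real (card (Fs g \<inter> {m<..n})) \<le> g * (real n - real m) + 1"
    "real (card (Fs g \<inter> {m<..n})) \<ge> g * (real n - real m) - 1"
proof -
  have e: "real (card (Fs g \<inter> {m<..n})) = of_int (\<lfloor>g * real n\<rfloor> - \<lfloor>g * real m\<rfloor>)"
    using Fs_count[OF assms] by (metis of_int_of_nat_eq)
  show "real (card (Fs g \<inter> {m<..n})) \<le> g * (real n - real m) + 1"
    unfolding e using floor_le_iff[of "g * real n"] le_floor_iff[of _ "g * real m"]
    by (simp add: algebra_simps) linarith
  show "real (card (Fs g \<inter> {m<..n})) \<ge> g * (real n - real m) - 1"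
    unfolding e by (simp add: algebra_simps) linarith
qed

primrec Nq :: "real \<Rightarrow> real \<Rightarrow> nat \<Rightarrow> nat" where
  "Nq b g 0 = 0"
| "Nq b g (Suc k) = Nq b g k + nat \<lceil>real (Nq b g k) / (1 - b/g)\<rceil> + nat \<lceil>1/b\<rceil>"

definition Mq :: "real \<Rightarrow> real \<Rightarrow> nat \<Rightarrow> nat" where
  "Mq b g k = nat \<lceil>(1 - b/g) * real (Nq b g k)\<rceil>"

definition Eset :: "real \<Rightarrow> real \<Rightarrow> real set" where
  "Eset b g = {xpt D | D k. D \<subseteq> Fs g \<inter> {Mq b g k<..Nq b g k}}"

locale bg =
  fixes b g :: real
  assumes b0: "0 < b" and bg: "b < g" and g1: "g \<le> 1"
begin

abbreviation "\<rho> \<equiv> 1 - b/g"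
abbreviation "N \<equiv> Nq b g"
abbreviation "M \<equiv> Mq b g"

lemma rho: "0 < \<rho>" "\<rho> < 1" "g * \<rho> = g - b"
  using b0 bg g1 by (auto simp: field_simps)

lemma N_ge: "k \<le> N k"
proof (induction k)
  case (Suc k)
  have "0 < \<lceil>1/b\<rceil>" using b0 by simp
  then have "nat \<lceil>1/b\<rceil> \<ge> 1" by linarith
  then show ?case using Suc by simp
qed simp

lemma N_Suc: "N k \<le> N (Suc k)" by simp

lemma N_mono: "k \<le> k' \<Longrightarrow> N k \<le> N k'"
  by (induction k' rule: dec_induct) (auto intro: le_trans)

lemma M_ge: "\<rho> * real (N k) \<le> real (M k)"
  unfolding Mq_def by linarith

lemma M_lt: "real (M k) < \<rho> * real (N k) + 1"
  unfolding Mq_def using rho by (simp add: ) linarith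

lemma M_le_N: "M k \<le> N k"
proof -
  have "\<rho> * real (N k) \<le> real (N k)" using rho by (simp add: mult_left_le_one_le)
  then show ?thesis unfolding Mq_def by (simp add: ceiling_le_iff nat_le_iff)
qed

lemma N_le_M: "N k \<le> M (Suc k)"
proof -
  have "real (N k) / \<rho> \<le> real (nat \<lceil>real (N k) / \<rho>\<rceil>)" by linarith
  also have "\<dots> \<le> real (N (Suc k))" by simp
  finally have "real (N k) \<le> \<rho> * real (N (Suc k))" using rho by (simp add: field_simps)
  then show ?thesis using M_ge[of "Suc k"] by linarith
qed

lemma N_step: "b * real (N (Suc k)) \<ge> b * real (N k) + 1"
proof -
  have "0 < \<lceil>1/b\<rceil>" using b0 by simp
  then have e: "real (nat \<lceil>1/b\<rceil>) = of_int \<lceil>1/b\<rceil>" by simp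
  have "b * (1/b) \<le> b * of_int \<lceil>1/b\<rceil>" using b0 by (intro mult_left_mono) auto
  then have "1 \<le> b * real (nat \<lceil>1/b\<rceil>)" using b0 e by simp
  moreover have "0 \<le> b * real (nat \<lceil>real (N k) / \<rho>\<rceil>)" using b0 by simp
  ultimately show ?thesis by (simp add: algebra_simps)
qed

end

lemma card_Pow_powr:
  assumes "finite S" "real (card S) \<le> X"
  shows "real (card (Pow S)) \<le> 2 powr X"
proof -
  have "real (card (Pow S)) = 2 powr real (card S)"
    using assms by (simp add: card_Pow powr_realpow)
  also have "\<dots> \<le> 2 powr X" using assms by simp
  finally show ?thesis .
qed

context bg begin

definition U :: "nat \<Rightarrow> nat set set" where
  "U j = (\<Union>k<j. Pow (Fs g \<inter> {M k<..N k}))"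

lemma U_finite: "finite (U j)" unfolding U_def by auto

lemma block_card: "real (card (Fs g \<inter> {M k<..N k})) \<le> b * real (N k) + 1"
proof -
  have "real (card (Fs g \<inter> {M k<..N k})) \<le> g * (real (N k) - real (M k)) + 1"
    using Fs_count_real(1)[of g "M k" "N k"] M_le_N b0 bg g1 by auto
  also have "\<dots> \<le> g * (real (N k) - \<rho> * real (N k)) + 1"
    using M_ge[of k] b0 bg by (intro add_right_mono mult_left_mono) auto
  also have "\<dots> = b * real (N k) + 1" using b0 bg by (simp add: field_simps)
  finally show ?thesis .
qed

lemma block_card_low: "real (card (Fs g \<inter> {M k<..N k})) \<ge> b * real (N k) - 2"
proof -
  have "real (card (Fs g \<inter> {M k<..N k})) \<ge> g * (real (N k) - real (M k)) - 1"
    using Fs_count_real(2)[of g "M k" "N k"] M_le_N b0 bg g1 by auto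
  moreover have "g * (real (N k) - real (M k)) \<ge> g * (real (N k) - (\<rho> * real (N k) + 1))"
    using M_lt[of k] b0 bg by (intro mult_left_mono) auto
  moreover have "g * (real (N k) - (\<rho> * real (N k) + 1)) = b * real (N k) - g"
    using b0 bg by (simp add: field_simps)
  ultimately show ?thesis using g1 by linarith
qed

lemma U_card: "real (card (U (Suc j))) \<le> 4 * 2 powr (b * real (N j))"
proof (induction j)
  case 0
  have "U (Suc 0) = Pow (Fs g \<inter> {M 0<..N 0})" unfolding U_def by (simp add: lessThan_Suc)
  moreover have "{M 0<..N 0} = {}" by simp
  ultimately show ?case by simp
next
  case (Suc j)
  have "U (Suc (Suc j)) = U (Suc j) \<union> Pow (Fs g \<inter> {M (Suc j)<..N (Suc j)})"
    unfolding U_def by (simp add: lessThan_Suc Un_commute)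
  then have "real (card (U (Suc (Suc j)))) \<le> real (card (U (Suc j))) + real (card (Pow (Fs g \<inter> {M (Suc j)<..N (Suc j)})))"
    by (metis card_Un_le of_nat_add of_nat_le_iff)
  also have "\<dots> \<le> 4 * 2 powr (b * real (N j)) + 2 powr (b * real (N (Suc j)) + 1)"
    using Suc block_card[of "Suc j"] by (intro add_mono card_Pow_powr) auto
  also have "\<dots> \<le> 4 * 2 powr (b * real (N (Suc j)))"
  proof -
    have "2 powr (b * real (N j) + 1) \<le> 2 powr (b * real (N (Suc j)))"
      using N_step[of j] by simp
    then show ?thesis by (simp add: powr_add)
  qed
  finally show ?case .
qed

lemma Eset_sub: "Eset b g \<subseteq> {1..2}"
proof
  fix x assume "x \<in> Eset b g"
  then obtain D k where D: "D \<subseteq> Fs g \<inter> {M k<..N k}" "x = xpt D" unfolding Eset_def by auto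
  have fin: "finite D" using D(1) finite_subset by blast
  have "(\<Sum>j\<in>D. (1/2::real)^j) < (1/2)^0" using D(1) fin by (intro tail_lt) auto
  then show "x \<in> {1..2}" using D(2) sum_nonneg_half[of D] unfolding xpt_def by auto
qed

lemma Q_sub:
  fixes n :: nat
  defines "K \<equiv> LEAST k. n \<le> N k"
  shows "(\<lambda>x. \<lfloor>(x - 1) / (1/2)^n\<rfloor>) ` Eset b g \<subseteq>
    (\<lambda>D. \<Sum>j\<in>D. (2::int)^(n-j)) ` (U K \<union> Pow (Fs g \<inter> {M K<..n}))"
proof
  have K1: "n \<le> N K" unfolding K_def by (rule LeastI[of _ n]) (rule N_ge)
  have K2: "N k < n" if "k < K" for k using not_less_Least[OF that[unfolded K_def]] by simp
  fix y assume "y \<in> (\<lambda>x. \<lfloor>(x - 1) / (1/2)^n\<rfloor>) ` Eset b g"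
  then obtain D k where D: "D \<subseteq> Fs g \<inter> {M k<..N k}" "y = \<lfloor>(xpt D - 1) / (1/2)^n\<rfloor>"
    unfolding Eset_def by auto
  have fin: "finite D" using D(1) finite_subset by blast
  have y: "y = (\<Sum>j\<in>D \<inter> {..n}. (2::int)^(n-j))" using D(2) xpt_floor[OF fin] by simp
  have "D \<inter> {..n} \<in> U K \<union> Pow (Fs g \<inter> {M K<..n})"
  proof (cases "k < K")
    case True then show ?thesis using D(1) unfolding U_def by blast
  next
    case False
    show ?thesis
    proof (cases "k = K")
      case True then show ?thesis using D(1) by auto
    next
      case False2: False
      then have "K \<le> k - 1" "k = Suc (k - 1)" using False by auto
      then have "N K \<le> M k" using N_mono[of K "k-1"] N_le_M[of "k-1"] by simp
      then have "D \<inter> {..n} = {}" using D(1) K1 by auto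
      then show ?thesis by auto
    qed
  qed
  then show "y \<in> (\<lambda>D. \<Sum>j\<in>D. (2::int)^(n-j)) ` (U K \<union> Pow (Fs g \<inter> {M K<..n}))"
    using y by blast
qed

lemma Q_card: "real (card ((\<lambda>x. \<lfloor>(x - 1) / (1/2)^n\<rfloor>) ` Eset b g)) \<le> 6 * 2 powr (b * real n)"
  and Q_fin: "finite ((\<lambda>x. \<lfloor>(x - 1) / (1/2)^n\<rfloor>) ` Eset b g)"
proof -
  define K where "K = (LEAST k. n \<le> N k)"
  have K1: "n \<le> N K" unfolding K_def by (rule LeastI[of _ n]) (rule N_ge)
  have K2: "N k < n" if "k < K" for k using not_less_Least[OF that[unfolded K_def]] by simp
  define A where "A = U K \<union> Pow (Fs g \<inter> {M K<..n})"
  have finA: "finite A" unfolding A_def using U_finite by auto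
  have sub: "(\<lambda>x. \<lfloor>(x - 1) / (1/2)^n\<rfloor>) ` Eset b g \<subseteq> (\<lambda>D. \<Sum>j\<in>D. (2::int)^(n-j)) ` A"
    unfolding A_def K_def by (rule Q_sub)
  then show "finite ((\<lambda>x. \<lfloor>(x - 1) / (1/2)^n\<rfloor>) ` Eset b g)"
    using finA finite_subset by blast
  have "card ((\<lambda>x. \<lfloor>(x - 1) / (1/2)^n\<rfloor>) ` Eset b g) \<le> card A"
    using sub finA by (meson card_image_le card_mono finite_imageI le_trans)
  also have "card A \<le> card (U K) + card (Pow (Fs g \<inter> {M K<..n}))"
    unfolding A_def by (rule card_Un_le)
  finally have c1: "real (card ((\<lambda>x. \<lfloor>(x - 1) / (1/2)^n\<rfloor>) ` Eset b g)) \<le> real (card (U K)) + real (card (Pow (Fs g \<inter> {M K<..n})))"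
    by linarith
  have c2: "real (card (U K)) \<le> 4 * 2 powr (b * real n)"
  proof (cases K)
    case 0 then show ?thesis unfolding U_def by simp
  next
    case (Suc j)
    have "real (card (U K)) \<le> 4 * 2 powr (b * real (N j))" using U_card[of j] Suc by simp
    also have "\<dots> \<le> 4 * 2 powr (b * real n)" using K2[of j] Suc b0 by simp
    finally show ?thesis .
  qed
  have c3: "real (card (Fs g \<inter> {M K<..n})) \<le> b * real n + 1"
  proof (cases "M K \<le> n")
    case True
    have "real (card (Fs g \<inter> {M K<..n})) \<le> g * (real n - real (M K)) + 1"
      using Fs_count_real(1)[OF _ _ True] b0 bg g1 by auto
    also have "\<dots> \<le> g * (real n - \<rho> * real n) + 1"
    proof -
      have "\<rho> * real n \<le> \<rho> * real (N K)" using K1 rho by simp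
      then have "\<rho> * real n \<le> real (M K)" using M_ge[of K] by linarith
      then show ?thesis using b0 bg by (intro add_right_mono mult_left_mono) auto
    qed
    also have "\<dots> = b * real n + 1" using b0 bg by (simp add: field_simps)
    finally show ?thesis .
  next
    case False
    then have "Fs g \<inter> {M K<..n} = {}" by auto
    then show ?thesis using b0 by simp
  qed
  have c4: "real (card (Pow (Fs g \<inter> {M K<..n}))) \<le> 2 * 2 powr (b * real n)"
    using card_Pow_powr[OF _ c3] by (simp add: powr_add)
  show "real (card ((\<lambda>x. \<lfloor>(x - 1) / (1/2)^n\<rfloor>) ` Eset b g)) \<le> 6 * 2 powr (b * real n)"
    using c1 c2 c4 by linarith
qed

end

lemma half_pow: "(1/2::real)^n = 2 powr (- real n)"
  by (simp add: powr_minus powr_realpow power_one_over inverse_eq_divide)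

lemma scale_delta:
  assumes "0 < \<delta>" "\<delta> < 1"
  shows "\<exists>n. (1/2::real)^n \<le> \<delta> \<and> \<delta> < 2 * (1/2)^n"
proof -
  obtain n0 where "(1/2::real)^n0 < \<delta>" using real_arch_pow_inv[of \<delta> "1/2"] assms by auto
  then have ex: "\<exists>n. (1/2::real)^n \<le> \<delta>" by (auto intro: less_imp_le)
  define n where "n = (LEAST n. (1/2::real)^n \<le> \<delta>)"
  have n1: "(1/2::real)^n \<le> \<delta>" unfolding n_def using ex by (rule LeastI_ex)
  have "n \<noteq> 0"
  proof
    assume "n = 0" then show False using n1 assms by simp
  qed
  then obtain j where j: "n = Suc j" by (cases n) auto
  have "j < n" using j by simp
  then have "\<not> (1/2::real)^j \<le> \<delta>" using not_less_Least[of j "\<lambda>n. (1/2::real)^n \<le> \<delta>"] unfolding n_def by blast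
  then have "\<delta> < 2 * (1/2)^n" using j by simp
  then show ?thesis using n1 by blast
qed

lemma scale_len:
  assumes "0 < t" "t \<le> 1"
  shows "\<exists>m. (1/2::real)^m < t \<and> t \<le> 2 * (1/2)^m"
proof -
  obtain n0 where "(1/2::real)^n0 < t" using real_arch_pow_inv[of t "1/2"] assms by auto
  then have ex: "\<exists>n. (1/2::real)^n < t" by auto
  define n where "n = (LEAST n. (1/2::real)^n < t)"
  have n1: "(1/2::real)^n < t" unfolding n_def using ex by (rule LeastI_ex)
  have "n \<noteq> 0"
  proof
    assume "n = 0" then show False using n1 assms by simp
  qed
  then obtain j where j: "n = Suc j" by (cases n) auto
  have "j < n" using j by simp
  then have "\<not> (1/2::real)^j < t" using not_less_Least[of j "\<lambda>n. (1/2::real)^n < t"] unfolding n_def by blast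
  then have "t \<le> 2 * (1/2)^n" using j by simp
  then show ?thesis using n1 by blast
qed

lemma pow_vs_delta:
  assumes "0 < \<delta>" "\<delta> < 2 * (1/2::real)^n" "0 \<le> a" "a \<le> 1"
  shows "2 powr (a * real n) \<le> 2 * \<delta> powr (-a)"
proof -
  have "2 powr (1 - real n) = 2 powr 1 * 2 powr (- real n)" unfolding diff_conv_add_uminus powr_add by simp
  then have e: "2 * (1/2::real)^n = 2 powr (1 - real n)" by (simp add: half_pow)
  have "(2 powr (1 - real n)) powr (-a) \<le> \<delta> powr (-a)"
    using assms e by (intro powr_mono2') auto
  moreover have "(2 powr (1 - real n)) powr (-a) = 2 powr (a * real n) / 2 powr a"
  proof -
    have "(2 powr (1 - real n)) powr (-a) = (2::real) powr ((1 - real n) * (-a))" by (rule powr_powr)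
    also have "\<dots> = 2 powr (a * real n - a)" by (simp add: algebra_simps)
    also have "\<dots> = 2 powr (a * real n) / 2 powr a" by (rule powr_diff)
    finally show ?thesis .
  qed
  moreover have "2 powr a \<le> 2"
  proof -
    have "2 powr a \<le> 2 powr (1::real)" using assms by (intro powr_mono) auto
    then show ?thesis by simp
  qed
  ultimately have "2 powr (a * real n) / 2 powr a \<le> \<delta> powr (-a)" "2 powr a \<le> 2" by auto
  then have "2 powr (a * real n) \<le> 2 powr a * \<delta> powr (-a)"
    by (simp add: divide_le_eq mult.commute)
  also have "\<dots> \<le> 2 * \<delta> powr (-a)" using \<open>2 powr a \<le> 2\<close> by (intro mult_right_mono) auto
  finally show ?thesis .
qed

context bg begin

lemma bound_A:
  assumes "0 < \<delta>" "\<delta> < 1"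
  shows "real (covnum (Eset b g) \<delta>) \<le> 12 * \<delta> powr (-b)"
proof -
  obtain n where n: "(1/2::real)^n \<le> \<delta>" "\<delta> < 2 * (1/2)^n" using scale_delta[OF assms] by blast
  have "covnum (Eset b g) \<delta> \<le> covnum (Eset b g) ((1/2)^n)"
    using n Eset_sub by (intro covnum_mono_delta) auto
  also have "\<dots> \<le> card ((\<lambda>x. \<lfloor>(x - 1) / (1/2)^n\<rfloor>) ` Eset b g)"
    using Q_fin by (intro covnum_floor) auto
  finally have "real (covnum (Eset b g) \<delta>) \<le> 6 * 2 powr (b * real n)"
    using Q_card[of n] by linarith
  also have "\<dots> \<le> 6 * (2 * \<delta> powr (-b))"
    using pow_vs_delta[OF assms(1) n(2), of b] b0 bg g1 by simp
  finally show ?thesis by simp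
qed

end

context bg begin

lemma Q_sub_B:
  assumes "m \<le> n" "\<And>x. x \<in> S \<Longrightarrow> \<lfloor>(x - 1) / (1/2)^m\<rfloor> \<in> {k0..k0+2}" "S \<subseteq> Eset b g"
  shows "(\<lambda>x. \<lfloor>(x - 1) / (1/2)^n\<rfloor>) ` S \<subseteq>
     (\<lambda>(a, c). 2^(n-m) * a + c) ` ({k0..k0+2} \<times> (\<lambda>D. \<Sum>j\<in>D. (2::int)^(n-j)) ` Pow (Fs g \<inter> {m<..n}))"
proof
  fix y assume "y \<in> (\<lambda>x. \<lfloor>(x - 1) / (1/2)^n\<rfloor>) ` S"
  then obtain x where x: "x \<in> S" "y = \<lfloor>(x - 1) / (1/2)^n\<rfloor>" by blast
  then obtain D k where D: "D \<subseteq> Fs g \<inter> {M k<..N k}" "x = xpt D"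
    using assms(3) unfolding Eset_def by blast
  have fin: "finite D" using D(1) finite_subset by blast
  have y: "y = 2^(n-m) * (\<Sum>j\<in>D \<inter> {..m}. (2::int)^(m-j)) + (\<Sum>j\<in>D \<inter> {m<..n}. (2::int)^(n-j))"
    using x(2) D(2) xpt_floor[OF fin] pow_split[OF assms(1) fin] by simp
  have a: "(\<Sum>j\<in>D \<inter> {..m}. (2::int)^(m-j)) \<in> {k0..k0+2}"
    using assms(2)[OF x(1)] D(2) xpt_floor[OF fin] by simp
  have c: "(\<Sum>j\<in>D \<inter> {m<..n}. (2::int)^(n-j)) \<in> (\<lambda>D. \<Sum>j\<in>D. (2::int)^(n-j)) ` Pow (Fs g \<inter> {m<..n})"
    using D(1) by blast
  show "y \<in> (\<lambda>(a, c). 2^(n-m) * a + c) ` ({k0..k0+2} \<times> (\<lambda>D. \<Sum>j\<in>D. (2::int)^(n-j)) ` Pow (Fs g \<inter> {m<..n}))"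
    using y a c by (intro image_eqI[where x="((\<Sum>j\<in>D \<inter> {..m}. (2::int)^(m-j)), (\<Sum>j\<in>D \<inter> {m<..n}. (2::int)^(n-j)))"]) auto
qed

lemma bound_B:
  assumes "0 < \<delta>" "\<delta> < 1" "I \<subseteq> {1..2}" "ilen I > \<delta>"
  shows "real (covnum (Eset b g \<inter> I) \<delta>) \<le> 12 * (\<delta> / ilen I) powr (-g)"
proof (cases "I = {}")
  case True then show ?thesis by (simp add: covnum_empty)
next
  case False
  define t where "t = ilen I"
  have bdd: "bdd_above I" "bdd_below I" using assms(3) by (auto intro: bdd_above_mono bdd_below_mono)
  have lo: "Inf I \<le> x" "x \<le> Sup I" if "x \<in> I" for x using that bdd by (auto intro: cInf_lower cSup_upper)
  have i1: "1 \<le> Inf I" using False assms(3) by (intro cInf_greatest) auto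
  have i2: "Sup I \<le> 2" using False assms(3) by (intro cSup_least) auto
  have t0: "\<delta> < t" "t \<le> 1" using assms(4) i1 i2 unfolding t_def ilen_def by auto
  obtain n where n: "(1/2::real)^n \<le> \<delta>" "\<delta> < 2 * (1/2)^n" using scale_delta[OF assms(1,2)] by blast
  obtain m where m: "(1/2::real)^m < t" "t \<le> 2 * (1/2)^m" using scale_len[of t] t0 assms(1) by auto
  have mn: "m \<le> n"
  proof (rule ccontr)
    assume "\<not> m \<le> n"
    then have "Suc n \<le> m" by simp
    then have "(1/2::real)^m \<le> (1/2)^(Suc n)" by (intro power_decreasing) auto
    then have "2 * (1/2::real)^m \<le> (1/2)^n" by simp
    then show False using n m t0 by linarith
  qed
  define k0 where "k0 = \<lfloor>(Inf I - 1) / (1/2::real)^m\<rfloor>"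
  have fl: "\<lfloor>(x - 1) / (1/2)^m\<rfloor> \<in> {k0..k0+2}" if "x \<in> Eset b g \<inter> I" for x
  proof -
    have x: "Inf I \<le> x" "x \<le> Inf I + t" using lo[of x] that unfolding t_def ilen_def by auto
    have "(Inf I - 1) / (1/2::real)^m \<le> (x - 1) / (1/2)^m" using x by (intro divide_right_mono) auto
    then have f1: "k0 \<le> \<lfloor>(x - 1) / (1/2)^m\<rfloor>" unfolding k0_def by (rule floor_mono)
    have "(x - 1) / (1/2::real)^m \<le> (Inf I - 1 + 2 * (1/2)^m) / (1/2)^m"
      using x m by (intro divide_right_mono) auto
    also have "\<dots> = (Inf I - 1) / (1/2)^m + 2" by (simp add: add_divide_distrib)
    finally have "\<lfloor>(x - 1) / (1/2::real)^m\<rfloor> \<le> \<lfloor>(Inf I - 1) / (1/2)^m + 2\<rfloor>" by (rule floor_mono)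
    also have "\<dots> = k0 + 2" unfolding k0_def by (metis floor_add_int of_int_numeral)
    finally show ?thesis using f1 by auto
  qed
  define R where "R = (\<lambda>D. \<Sum>j\<in>D. (2::int)^(n-j)) ` Pow (Fs g \<inter> {m<..n})"
  have sub: "(\<lambda>x. \<lfloor>(x - 1) / (1/2)^n\<rfloor>) ` (Eset b g \<inter> I) \<subseteq> (\<lambda>(a, c). 2^(n-m) * a + c) ` ({k0..k0+2} \<times> R)"
    unfolding R_def using mn fl by (intro Q_sub_B) auto
  have finR: "finite R" unfolding R_def by auto
  have finP: "finite ({k0..k0+2} \<times> R)" using finR by auto
  have "card ((\<lambda>x. \<lfloor>(x - 1) / (1/2)^n\<rfloor>) ` (Eset b g \<inter> I)) \<le> card ({k0..k0+2} \<times> R)"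
    using sub finP by (meson card_image_le card_mono finite_imageI le_trans)
  also have "\<dots> = 3 * card R" by (simp add: card_cartesian_product)
  also have "card R \<le> card (Pow (Fs g \<inter> {m<..n}))" unfolding R_def by (rule card_image_le) auto
  finally have c1: "real (card ((\<lambda>x. \<lfloor>(x - 1) / (1/2)^n\<rfloor>) ` (Eset b g \<inter> I))) \<le> 3 * real (card (Pow (Fs g \<inter> {m<..n})))"
    by linarith
  have "real (card (Fs g \<inter> {m<..n})) \<le> g * (real n - real m) + 1"
    using Fs_count_real(1)[OF _ _ mn] b0 bg g1 by auto
  then have c2': "real (card (Pow (Fs g \<inter> {m<..n}))) \<le> 2 powr (g * (real n - real m) + 1)"
    by (intro card_Pow_powr) auto
  have "(2::real) powr (g * (real n - real m) + 1) = 2 * 2 powr (g * (real n - real m))"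
    by (simp add: powr_add)
  then have c2: "real (card (Pow (Fs g \<inter> {m<..n}))) \<le> 2 * 2 powr (g * (real n - real m))"
    using c2' by simp
  have fin: "finite ((\<lambda>x. \<lfloor>(x - 1) / (1/2)^n\<rfloor>) ` (Eset b g \<inter> I))"
    using sub finP finite_subset by blast
  have "covnum (Eset b g \<inter> I) \<delta> \<le> covnum (Eset b g \<inter> I) ((1/2)^n)"
    using n Eset_sub by (intro covnum_mono_delta[where lo=1 and hi=2]) auto
  also have "\<dots> \<le> card ((\<lambda>x. \<lfloor>(x - 1) / (1/2)^n\<rfloor>) ` (Eset b g \<inter> I))"
    using fin by (intro covnum_floor) auto
  finally have c3: "real (covnum (Eset b g \<inter> I) \<delta>) \<le> 6 * 2 powr (g * (real n - real m))"
    using c1 c2 by linarith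
  have r: "t / \<delta> \<ge> 2^(n-m) / 2"
  proof -
    have "(1/2::real)^m / (2 * (1/2)^n) = 2^(n-m) / 2" using half_pow_div[OF mn] by simp
    moreover have "(1/2::real)^m / (2 * (1/2)^n) \<le> t / \<delta>"
      using m n assms(1) by (intro frac_le) auto
    ultimately show ?thesis by linarith
  qed
  have p: "(2::real)^(n-m) = 2 powr (real n - real m)"
  proof -
    have "(2::real)^(n-m) = 2 powr real (n - m)" by (rule powr_realpow[symmetric]) simp
    moreover have "real (n - m) = real n - real m" using mn by (rule of_nat_diff)
    ultimately show ?thesis by simp
  qed
  have q1: "(2 powr (real n - real m) / 2) powr g \<le> (t / \<delta>) powr g"
    using r p b0 bg by (intro powr_mono2) auto
  have q2: "(2 powr (real n - real m) / 2) powr g = 2 powr (g * (real n - real m)) / 2 powr g"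
  proof -
    have "(2 powr (real n - real m) / 2) powr g = (2 powr (real n - real m)) powr g / 2 powr g"
      by (rule powr_divide)
    also have "(2 powr (real n - real m)) powr g = (2::real) powr ((real n - real m) * g)"
      by (rule powr_powr)
    finally show ?thesis by (simp add: mult.commute)
  qed
  have q3: "2 powr g \<le> (2::real)"
  proof -
    have "2 powr g \<le> 2 powr (1::real)" using g1 by (intro powr_mono) auto
    then show ?thesis by simp
  qed
  have q4: "(\<delta> / t) powr (-g) = (t / \<delta>) powr g"
  proof -
    have "(\<delta> / t) powr (-g) = inverse ((\<delta> / t) powr g)" by (rule powr_minus)
    also have "\<dots> = (inverse (\<delta> / t)) powr g" by (rule inverse_powr[symmetric])
    finally show ?thesis by simp
  qed
  have "2 powr (g * (real n - real m)) / 2 powr g \<le> (t / \<delta>) powr g" using q1 q2 by simp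
  then have "2 powr (g * (real n - real m)) \<le> 2 powr g * (t / \<delta>) powr g"
    by (simp add: divide_le_eq mult.commute)
  also have "\<dots> \<le> 2 * (t / \<delta>) powr g" using q3 by (intro mult_right_mono) auto
  finally have "2 powr (g * (real n - real m)) \<le> 2 * (\<delta> / t) powr (-g)" using q4 by simp
  then show ?thesis using c3 unfolding t_def by linarith
qed

end

lemma powr_contra:
  assumes "2 powr u \<le> c * 2 powr v" "u - v \<ge> log 2 (\<bar>c\<bar> + 1)"
  shows False
proof -
  have "2 powr u / 2 powr v \<le> c" using assms(1) by (simp add: divide_le_eq)
  then have "2 powr (u - v) \<le> c" by (simp add: powr_diff)
  moreover have "2 powr (log 2 (\<bar>c\<bar> + 1)) \<le> 2 powr (u - v)" by (rule powr_mono) (use assms(2) in auto)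
  moreover have "2 powr (log 2 (\<bar>c\<bar> + 1)) = \<bar>c\<bar> + 1" by simp
  ultimately show False by linarith
qed

lemma half_pow_powr: "((1/2::real)^n) powr a = 2 powr (- real n * a)"
  by (simp add: half_pow powr_powr)

context bg begin

lemma N_large: "\<epsilon> > 0 \<Longrightarrow> \<exists>k0. \<forall>k\<ge>k0. X \<le> \<epsilon> * real (N k)"
proof -
  assume e: "\<epsilon> > 0"
  define k0 where "k0 = nat \<lceil>X / \<epsilon>\<rceil>"
  have "X \<le> \<epsilon> * real (N k)" if "k \<ge> k0" for k
  proof -
    have "X / \<epsilon> \<le> real k0" unfolding k0_def by linarith
    also have "\<dots> \<le> real (N k)" using that N_ge[of k] by linarith
    finally show ?thesis using e by (simp add: divide_le_eq mult.commute)
  qed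
  then show ?thesis by blast
qed

definition P :: "nat \<Rightarrow> real set" where
  "P k = xpt ` Pow (Fs g \<inter> {M k<..N k})"

lemma P_sub: "P k \<subseteq> Eset b g" unfolding P_def Eset_def by blast

lemma P_card: "real (card (P k)) \<ge> 2 powr (g * (real (N k) - real (M k)) - 1)"
  and P_card2: "real (card (P k)) \<ge> 2 powr (b * real (N k) - 2)"
proof -
  have "inj_on xpt (Pow (Fs g \<inter> {M k<..N k}))"
    by (rule inj_on_subset[OF xpt_inj[of "N k"]]) auto
  then have "card (P k) = card (Pow (Fs g \<inter> {M k<..N k}))"
    unfolding P_def by (rule card_image)
  also have "\<dots> = 2 ^ card (Fs g \<inter> {M k<..N k})" by (rule card_Pow) simp
  finally have c: "card (P k) = 2 ^ card (Fs g \<inter> {M k<..N k})" .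
  have r: "real (card (P k)) = 2 powr real (card (Fs g \<inter> {M k<..N k}))"
    unfolding c by (simp add: powr_realpow)
  have "g * (real (N k) - real (M k)) - 1 \<le> real (card (Fs g \<inter> {M k<..N k}))"
    using Fs_count_real(2)[of g "M k" "N k"] M_le_N b0 bg g1 by auto
  then show "real (card (P k)) \<ge> 2 powr (g * (real (N k) - real (M k)) - 1)" unfolding r by simp
  show "real (card (P k)) \<ge> 2 powr (b * real (N k) - 2)" unfolding r using block_card_low[of k] by simp
qed

lemma P_sep: "x \<in> P k \<Longrightarrow> y \<in> P k \<Longrightarrow> x \<noteq> y \<Longrightarrow> \<bar>x - y\<bar> > (1/2)^(N k + 1)"
proof -
  assume xy: "x \<in> P k" "y \<in> P k" "x \<noteq> y"
  obtain D where D1: "D \<in> Pow (Fs g \<inter> {M k<..N k})" "x = xpt D"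
    using xy(1) unfolding P_def by (rule imageE) auto
  obtain D' where D2: "D' \<in> Pow (Fs g \<inter> {M k<..N k})" "y = xpt D'"
    using xy(2) unfolding P_def by (rule imageE) auto
  have D: "D \<subseteq> {..N k}" "D' \<subseteq> {..N k}" "x = xpt D" "y = xpt D'" using D1 D2 by auto
  then have "D \<noteq> D'" using xy by auto
  then have "\<bar>x - y\<bar> \<ge> (1/2)^(N k)" using xpt_sep D by simp
  moreover have "(1/2::real)^(N k + 1) < (1/2)^(N k)" by simp
  ultimately show ?thesis by linarith
qed

lemma P_fin: "finite (P k)" unfolding P_def by auto

lemma P_in: "P k \<subseteq> {1 .. 1 + (1/2)^(M k)}"
proof
  fix x assume "x \<in> P k"
  then obtain D where D: "D \<subseteq> Fs g \<inter> {M k<..N k}" "x = xpt D" unfolding P_def by auto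
  have fin: "finite D" using D(1) finite_subset by blast
  have "(\<Sum>j\<in>D. (1/2::real)^j) < (1/2)^(M k)" using D(1) fin by (intro tail_lt) auto
  then show "x \<in> {1 .. 1 + (1/2)^(M k)}" using D(2) sum_nonneg_half[of D] unfolding xpt_def by auto
qed

lemma covnum_P:
  assumes "P k \<subseteq> T" "T \<subseteq> {1..2}"
  shows "card (P k) \<le> covnum T ((1/2)^(N k + 1))"
  using assms P_fin P_sep by (intro covnum_lower[where lo=1 and hi=2]) auto

lemma dimM_low:
  assumes "a < b" "\<forall>\<delta>. 0 < \<delta> \<and> \<delta> < 1 \<longrightarrow> real (covnum (Eset b g) \<delta>) \<le> c * \<delta> powr (-a)"
  shows False
proof -
  obtain k0 where k0: "\<And>k. k \<ge> k0 \<Longrightarrow> log 2 (\<bar>c\<bar> + 1) + 3 \<le> (b - a) * real (N k)"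
    using N_large[of "b - a"] assms(1) by auto
  define k where "k = k0"
  define \<delta> where "\<delta> = (1/2::real)^(N k + 1)"
  have d: "0 < \<delta>" "\<delta> < 1" unfolding \<delta>_def using power_Suc_less_one[of "1/2::real" "N k"] by auto
  have "2 powr (b * real (N k) - 2) \<le> real (card (P k))" by (rule P_card2)
  also have "\<dots> \<le> real (covnum (Eset b g) \<delta>)" unfolding \<delta>_def using covnum_P[OF P_sub Eset_sub] by simp
  also have "\<dots> \<le> c * \<delta> powr (-a)" using assms(2) d by auto
  also have "\<delta> powr (-a) = 2 powr (a * (real (N k) + 1))" unfolding \<delta>_def half_pow_powr by (simp add: algebra_simps)
  finally have "2 powr (b * real (N k) - 2) \<le> c * 2 powr (a * (real (N k) + 1))" .
  moreover have "b * real (N k) - 2 - a * (real (N k) + 1) \<ge> log 2 (\<bar>c\<bar> + 1)"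
    using k0[of k] unfolding k_def using assms(1) b0 bg g1 by (simp add: algebra_simps)
  ultimately show False by (rule powr_contra)
qed

end

lemma powr_split_div:
  fixes \<delta> t a :: real
  assumes "0 < \<delta>" "0 < t"
  shows "(\<delta> / t) powr (-a) = \<delta> powr (-a) * t powr a"
proof -
  have "(\<delta> / t) powr (-a) = \<delta> powr (-a) / t powr (-a)" by (simp add: powr_divide)
  also have "t powr (-a) = inverse (t powr a)" by (rule powr_minus)
  finally show ?thesis by (simp add: divide_inverse)
qed

context bg begin

lemma spec_low:
  assumes "\<rho> < \<theta>" "\<theta> < 1" "0 < a" "a < g"
  shows "\<exists>I \<delta>. 0 < \<delta> \<and> \<delta> < 1 \<and> is_interval I \<and> I \<subseteq> {1..2} \<and> \<delta> powr \<theta> \<le> ilen I \<and> \<delta> < ilen I \<and>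
     real (covnum (Eset b g \<inter> I) \<delta>) > c * \<delta> powr (-a) * ilen I powr a"
proof -
  obtain k0 where k0: "\<And>k. k \<ge> k0 \<Longrightarrow> 1 \<le> (\<theta> - \<rho>) * real (N k)"
    using N_large[of "\<theta> - \<rho>" 1] assms(1) by auto
  have e2: "(g - a) * (b / g) > 0" using assms b0 bg by simp
  obtain k1 where k1: "\<And>k. k \<ge> k1 \<Longrightarrow> log 2 (\<bar>c\<bar> + 1) + 3 \<le> ((g - a) * (b / g)) * real (N k)"
    using N_large[OF e2] by blast
  define k where "k = max k0 k1"
  have h1: "1 \<le> (\<theta> - \<rho>) * real (N k)" using k0[of k] unfolding k_def by simp
  have h2: "log 2 (\<bar>c\<bar> + 1) + 3 \<le> ((g - a) * (b / g)) * real (N k)" using k1[of k] unfolding k_def by simp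
  define \<delta> where "\<delta> = (1/2::real)^(N k + 1)"
  define I where "I = {1 .. 1 + (1/2::real)^(M k)}"
  have d: "0 < \<delta>" "\<delta> < 1" unfolding \<delta>_def using power_Suc_less_one[of "1/2::real" "N k"] by auto
  have il: "ilen I = (1/2)^(M k)" unfolding I_def ilen_def by simp
  have Isub: "I \<subseteq> {1..2}" unfolding I_def using power_le_one[of "1/2::real" "M k"] by auto
  have dl: "\<delta> < ilen I" unfolding il \<delta>_def using M_le_N[of k]
    by (intro power_strict_decreasing) auto
  have Mlt: "real (M k) \<le> \<theta> * (real (N k) + 1)"
  proof -
    have "real (M k) < \<rho> * real (N k) + 1" by (rule M_lt)
    also have "\<dots> \<le> \<theta> * real (N k)" using h1 by (simp add: algebra_simps)
    also have "\<dots> \<le> \<theta> * (real (N k) + 1)"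
    proof -
      have "0 \<le> \<theta>" using assms(1) rho(1) by linarith
      then show ?thesis by (simp add: distrib_left)
    qed
    finally show ?thesis by simp
  qed
  have dth: "\<delta> powr \<theta> \<le> ilen I"
  proof -
    have "\<delta> powr \<theta> = 2 powr (- (real (N k) + 1) * \<theta>)" unfolding \<delta>_def half_pow_powr by (simp add: algebra_simps)
    also have "\<dots> \<le> 2 powr (- real (M k))" using Mlt by (intro powr_mono) (auto simp: algebra_simps)
    also have "\<dots> = ilen I" unfolding il half_pow ..
    finally show ?thesis .
  qed
  have "real (covnum (Eset b g \<inter> I) \<delta>) > c * \<delta> powr (-a) * ilen I powr a"
  proof (rule ccontr)
    assume "\<not> ?thesis"
    then have A: "real (covnum (Eset b g \<inter> I) \<delta>) \<le> c * \<delta> powr (-a) * ilen I powr a" by simp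
    have "2 powr (g * (real (N k) - real (M k)) - 1) \<le> real (card (P k))" by (rule P_card)
    also have "\<dots> \<le> real (covnum (Eset b g \<inter> I) \<delta>)"
    proof -
      have s1: "P k \<subseteq> Eset b g \<inter> I" using P_sub P_in unfolding I_def by blast
      have s2: "Eset b g \<inter> I \<subseteq> {1..2}" using Eset_sub by blast
      have "card (P k) \<le> covnum (Eset b g \<inter> I) ((1/2)^(N k + 1))" using s1 s2 by (rule covnum_P)
      then show ?thesis unfolding \<delta>_def by linarith
    qed
    also have "\<dots> \<le> c * \<delta> powr (-a) * ilen I powr a" by (rule A)
    finally have C1: "2 powr (g * (real (N k) - real (M k)) - 1) \<le> c * \<delta> powr (-a) * ilen I powr a" .
    have E: "\<delta> powr (-a) * ilen I powr a = 2 powr (a * (real (N k) + 1) - a * real (M k))"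
      unfolding \<delta>_def il half_pow_powr by (simp add: powr_add[symmetric] algebra_simps)
    have "c * \<delta> powr (-a) * ilen I powr a = c * 2 powr (a * (real (N k) + 1) - a * real (M k))"
      using E by (simp add: mult.assoc)
    then have B: "2 powr (g * (real (N k) - real (M k)) - 1) \<le> c * 2 powr (a * (real (N k) + 1) - a * real (M k))"
      using C1 by linarith
    have "real (N k) - real (M k) \<ge> (b / g) * real (N k) - 1"
    proof -
      have "real (M k) < \<rho> * real (N k) + 1" by (rule M_lt)
      then show ?thesis by (simp add: algebra_simps)
    qed
    then have "(g - a) * (real (N k) - real (M k)) \<ge> (g - a) * ((b / g) * real (N k) - 1)"
      using assms by (intro mult_left_mono) auto
    moreover have "(g - a) * ((b / g) * real (N k) - 1) = ((g - a) * (b / g)) * real (N k) - (g - a)"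
      by (simp add: algebra_simps)
    ultimately have "(g - a) * (real (N k) - real (M k)) \<ge> log 2 (\<bar>c\<bar> + 1) + 2"
      using h2 assms g1 by linarith
    then have "g * (real (N k) - real (M k)) - 1 - (a * (real (N k) + 1) - a * real (M k)) \<ge> log 2 (\<bar>c\<bar> + 1)"
      using assms g1 by (simp add: algebra_simps)
    with B show False by (rule powr_contra)
  qed
  then show ?thesis using d Isub dth dl unfolding I_def
    by (intro exI[of _ I] exI[of _ \<delta>]) (auto simp: I_def)
qed

end

theorem lemma6p1:
  shows "\<exists>E :: real \<Rightarrow> real \<Rightarrow> real set.
    (\<forall>\<beta> \<gamma>. 0 < \<beta> \<and> \<beta> < \<gamma> \<and> \<gamma> \<le> 1 \<longrightarrow>
        E \<beta> \<gamma> \<subseteq> {1..2} \<and> assouad_regular \<beta> \<gamma> (E \<beta> \<gamma>)) \<and>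
    (\<exists>c::real. c \<ge> 1 \<and>
      (\<forall>\<beta> \<gamma> \<delta> I. 0 < \<beta> \<and> \<beta> < \<gamma> \<and> \<gamma> \<le> 1 \<and> 0 < \<delta> \<and> \<delta> < 1 \<and>
         is_interval I \<and> I \<subseteq> {1..2} \<and> ilen I > \<delta> \<longrightarrow>
         real (covnum (E \<beta> \<gamma>) \<delta>) \<le> c * \<delta> powr (-\<beta>) \<and>
         real (covnum (E \<beta> \<gamma> \<inter> I) \<delta>) \<le> c * (\<delta> / ilen I) powr (-\<gamma>)))"
proof (intro exI[of _ Eset] conjI allI impI)
  fix \<beta> \<gamma> :: real
  assume a: "0 < \<beta> \<and> \<beta> < \<gamma> \<and> \<gamma> \<le> 1"
  interpret bg \<beta> \<gamma> using a by unfold_locales auto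
  show "Eset \<beta> \<gamma> \<subseteq> {1..2}" by (rule Eset_sub)
  have dM: "dimM (Eset \<beta> \<gamma>) = \<beta>"
    unfolding dimM_def
  proof (rule cInf_eq_minimum)
    show "\<beta> \<in> {a. a > 0 \<and> (\<exists>c. \<forall>\<delta>. 0 < \<delta> \<and> \<delta> < 1 \<longrightarrow> real (covnum (Eset \<beta> \<gamma>) \<delta>) \<le> c * \<delta> powr (-a))}"
      using a bound_A by auto
  next
    fix x assume "x \<in> {a. a > 0 \<and> (\<exists>c. \<forall>\<delta>. 0 < \<delta> \<and> \<delta> < 1 \<longrightarrow> real (covnum (Eset \<beta> \<gamma>) \<delta>) \<le> c * \<delta> powr (-a))}"
    then obtain c where c: "\<forall>\<delta>. 0 < \<delta> \<and> \<delta> < 1 \<longrightarrow> real (covnum (Eset \<beta> \<gamma>) \<delta>) \<le> c * \<delta> powr (-x)" by auto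
    show "\<beta> \<le> x"
    proof (rule ccontr)
      assume "\<not> \<beta> \<le> x"
      then show False using dimM_low[of x c] c by auto
    qed
  qed
  have Bset: "real (covnum (Eset \<beta> \<gamma> \<inter> I) \<delta>) \<le> 12 * \<delta> powr (-\<gamma>) * ilen I powr \<gamma>"
    if "0 < \<delta>" "\<delta> < 1" "I \<subseteq> {1..2}" "\<delta> < ilen I" for I \<delta>
    using bound_B[OF that(1,2,3,4)] powr_split_div[of \<delta> "ilen I" \<gamma>] that by (simp add: mult.assoc)
  obtain \<theta>0 where th0: "\<rho> < \<theta>0" "\<theta>0 < 1" using rho(2) dense by blast
  have dA: "dimA (Eset \<beta> \<gamma>) = \<gamma>"
    unfolding dimA_def
  proof (rule cInf_eq_minimum)
    show "\<gamma> \<in> {a. a > 0 \<and> (\<exists>c. \<forall>I \<delta>. is_interval I \<and> I \<subseteq> {1..2} \<and> 0 < \<delta> \<and> \<delta> < ilen I \<longrightarrow>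
      real (covnum (Eset \<beta> \<gamma> \<inter> I) \<delta>) \<le> c * \<delta> powr (-a) * ilen I powr a)}"
    proof (safe)
      show "0 < \<gamma>" using a by auto
      show "\<exists>c. \<forall>I \<delta>. is_interval I \<and> I \<subseteq> {1..2} \<and> 0 < \<delta> \<and> \<delta> < ilen I \<longrightarrow>
        real (covnum (Eset \<beta> \<gamma> \<inter> I) \<delta>) \<le> c * \<delta> powr (-\<gamma>) * ilen I powr \<gamma>"
      proof (intro exI[of _ 12] allI impI)
        fix I \<delta> assume h: "is_interval I \<and> I \<subseteq> {1..2} \<and> 0 < \<delta> \<and> \<delta> < ilen I"
        show "real (covnum (Eset \<beta> \<gamma> \<inter> I) \<delta>) \<le> 12 * \<delta> powr (-\<gamma>) * ilen I powr \<gamma>"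
        proof (cases "I = {}")
          case True then show ?thesis by (simp add: covnum_empty)
        next
          case False
          have "Sup I \<le> 2" "1 \<le> Inf I" using False h by (auto intro!: cSup_least cInf_greatest)
          then have "ilen I \<le> 1" by (simp add: ilen_def)
          then show ?thesis using Bset h by auto
        qed
      qed
    qed
  next
    fix x assume "x \<in> {a. a > 0 \<and> (\<exists>c. \<forall>I \<delta>. is_interval I \<and> I \<subseteq> {1..2} \<and> 0 < \<delta> \<and> \<delta> < ilen I \<longrightarrow>
      real (covnum (Eset \<beta> \<gamma> \<inter> I) \<delta>) \<le> c * \<delta> powr (-a) * ilen I powr a)}"
    then obtain c where x0: "x > 0" and c: "\<forall>I \<delta>. is_interval I \<and> I \<subseteq> {1..2} \<and> 0 < \<delta> \<and> \<delta> < ilen I \<longrightarrow>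
      real (covnum (Eset \<beta> \<gamma> \<inter> I) \<delta>) \<le> c * \<delta> powr (-x) * ilen I powr x" by auto
    show "\<gamma> \<le> x"
    proof (rule ccontr)
      assume "\<not> \<gamma> \<le> x"
      then obtain I \<delta> where "0 < \<delta> \<and> \<delta> < 1 \<and> is_interval I \<and> I \<subseteq> {1..2} \<and> \<delta> powr \<theta>0 \<le> ilen I \<and> \<delta> < ilen I \<and>
         real (covnum (Eset \<beta> \<gamma> \<inter> I) \<delta>) > c * \<delta> powr (-x) * ilen I powr x"
        using spec_low[OF th0 x0, of c] by auto
      then show False using c by force
    qed
  qed
  have dS: "dimAspec \<theta> (Eset \<beta> \<gamma>) = \<gamma>" if th: "1 - \<beta> / \<gamma> < \<theta>" "\<theta> < 1" for \<theta>
    unfolding dimAspec_def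
  proof (rule cInf_eq_minimum)
    show "\<gamma> \<in> {a. a > 0 \<and> (\<exists>c. \<forall>I \<delta>. 0 < \<delta> \<and> \<delta> < 1 \<and> is_interval I \<and> I \<subseteq> {1..2} \<and> ilen I \<ge> \<delta> powr \<theta> \<longrightarrow>
      real (covnum (Eset \<beta> \<gamma> \<inter> I) \<delta>) \<le> c * \<delta> powr (-a) * ilen I powr a)}"
    proof (safe)
      show "0 < \<gamma>" using a by auto
      show "\<exists>c. \<forall>I \<delta>. 0 < \<delta> \<and> \<delta> < 1 \<and> is_interval I \<and> I \<subseteq> {1..2} \<and> ilen I \<ge> \<delta> powr \<theta> \<longrightarrow>
        real (covnum (Eset \<beta> \<gamma> \<inter> I) \<delta>) \<le> c * \<delta> powr (-\<gamma>) * ilen I powr \<gamma>"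
      proof (intro exI[of _ 12] allI impI)
        fix I \<delta> assume h: "0 < \<delta> \<and> \<delta> < 1 \<and> is_interval I \<and> I \<subseteq> {1..2} \<and> ilen I \<ge> \<delta> powr \<theta>"
        have "\<delta> powr 1 < \<delta> powr \<theta>" using h th by (intro powr_less_mono') auto
        then have "\<delta> < ilen I" using h by auto
        then show "real (covnum (Eset \<beta> \<gamma> \<inter> I) \<delta>) \<le> 12 * \<delta> powr (-\<gamma>) * ilen I powr \<gamma>"
          using Bset h by auto
      qed
    qed
  next
    fix x assume "x \<in> {a. a > 0 \<and> (\<exists>c. \<forall>I \<delta>. 0 < \<delta> \<and> \<delta> < 1 \<and> is_interval I \<and> I \<subseteq> {1..2} \<and> ilen I \<ge> \<delta> powr \<theta> \<longrightarrow>
      real (covnum (Eset \<beta> \<gamma> \<inter> I) \<delta>) \<le> c * \<delta> powr (-a) * ilen I powr a)}"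
    then obtain c where x0: "x > 0" and c: "\<forall>I \<delta>. 0 < \<delta> \<and> \<delta> < 1 \<and> is_interval I \<and> I \<subseteq> {1..2} \<and> ilen I \<ge> \<delta> powr \<theta> \<longrightarrow>
      real (covnum (Eset \<beta> \<gamma> \<inter> I) \<delta>) \<le> c * \<delta> powr (-x) * ilen I powr x" by auto
    show "\<gamma> \<le> x"
    proof (rule ccontr)
      assume "\<not> \<gamma> \<le> x"
      then obtain I \<delta> where "0 < \<delta> \<and> \<delta> < 1 \<and> is_interval I \<and> I \<subseteq> {1..2} \<and> \<delta> powr \<theta> \<le> ilen I \<and> \<delta> < ilen I \<and>
         real (covnum (Eset \<beta> \<gamma> \<inter> I) \<delta>) > c * \<delta> powr (-x) * ilen I powr x"
        using spec_low[OF _ th(2) x0, of c] th(1) by auto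
      then show False using c by force
    qed
  qed
  show "assouad_regular \<beta> \<gamma> (Eset \<beta> \<gamma>)"
    unfolding assouad_regular_def using dM dA dS by auto
next
  show "\<exists>c::real. c \<ge> 1 \<and>
      (\<forall>\<beta> \<gamma> \<delta> I. 0 < \<beta> \<and> \<beta> < \<gamma> \<and> \<gamma> \<le> 1 \<and> 0 < \<delta> \<and> \<delta> < 1 \<and>
         is_interval I \<and> I \<subseteq> {1..2} \<and> ilen I > \<delta> \<longrightarrow>
         real (covnum (Eset \<beta> \<gamma>) \<delta>) \<le> c * \<delta> powr (-\<beta>) \<and>
         real (covnum (Eset \<beta> \<gamma> \<inter> I) \<delta>) \<le> c * (\<delta> / ilen I) powr (-\<gamma>))"
  proof (intro exI[of _ 12] conjI allI impI)
    fix \<beta> \<gamma> \<delta> :: real and I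
    assume h: "0 < \<beta> \<and> \<beta> < \<gamma> \<and> \<gamma> \<le> 1 \<and> 0 < \<delta> \<and> \<delta> < 1 \<and> is_interval I \<and> I \<subseteq> {1..2} \<and> ilen I > \<delta>"
    interpret bg \<beta> \<gamma> using h by unfold_locales auto
    show "real (covnum (Eset \<beta> \<gamma>) \<delta>) \<le> 12 * \<delta> powr (-\<beta>)" using bound_A h by auto
    show "real (covnum (Eset \<beta> \<gamma> \<inter> I) \<delta>) \<le> 12 * (\<delta> / ilen I) powr (-\<gamma>)" using bound_B h by auto
  qed simp
qed

end
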